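(* In the free-group setting described in the context, the map $\pi_Y\circ\pi_f:X_f\to Y$ is not open.
   Context: Let $r\ge2$ and $\Gamma=F_r$ free on $S=\{a,b,a_3,\dots,a_r\}$. $Y$ is the Gromov boundary (infinite reduced words in $S\cup S^{-1}$, $\Gamma$ acting by concatenation and cancellation). For nontrivial $s\in\Gamma$, $y\in Y$ starts with $s$ if $y=sy'$ with the last letter of $s$ not inverse to the first letter of $y'$; $V_s$ is the set of such $y$; $a^\infty$ is the constant word $a$. Let $\{\Gamma_n\}$ be strictly decreasing finite-index normal subgroups with trivial intersection, $Z=\varprojlim\Gamma/\Gamma_n$ with left translation, $\pi_n:Z\to\Gamma/\Gamma_n$, $X=Y\times Z$ with product action, $\pi_Y:X\to Y$ the projection. For $n\ge2$ choose $\gamma_n\in\Gamma_{n-1}\setminus\Gamma_n$; $u_n=a^nba^{-n}b^{-1}$, $D_n=V_{u_n}$, $C_n=\pi_n^{-1}(\gamma_n\Gamma_n)$, $X_+=\bigcup_{n\ge2}D_n\times C_n$, $X_-=X\setminus(X_+\cup\{(a^\infty,e_\Gamma)\})$, $f=\pm1$ on $X_\pm$. $\pi_f:X_f\to X$ is the McMahon extension: the (unique up to conjugacy) minimal continuous action on a compact metrizable space with equivariant continuous surjection whose fibers are single points off $\Gamma(a^\infty,e_\Gamma)$ and two points on it, such that $f\circ\pi_f$ extends continuously to $X_f$. *)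

theory Defs
  imports "HOL-Algebra.Coset" "HOL-Analysis.Analysis"
begin

section \<open>The free group F_r on generators 0,...,r-1 (a = 0, b = 1, a_k = k-1)\<close>

type_synonym letter = "nat \<times> bool"   (* (generator index, True = positive exponent) *)
type_synonym word = "letter list"
type_synonym iword = "nat \<Rightarrow> letter"

definition letter_inv :: "letter \<Rightarrow> letter" where
  "letter_inv l = (fst l, \<not> snd l)"

definition valid_letter :: "nat \<Rightarrow> letter \<Rightarrow> bool" where
  "valid_letter r l \<longleftrightarrow> fst l < r"

definition reduced :: "nat \<Rightarrow> word \<Rightarrow> bool" where
  "reduced r w \<longleftrightarrow> (\<forall>l\<in>set w. valid_letter r l) \<and>
     (\<forall>i. Suc i < length w \<longrightarrow> w ! Suc i \<noteq> letter_inv (w ! i))"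

definition red_cons :: "letter \<Rightarrow> word \<Rightarrow> word" where
  "red_cons x ys = (case ys of [] \<Rightarrow> [x] | y # ys' \<Rightarrow> if y = letter_inv x then ys' else x # ys)"

definition word_mult :: "word \<Rightarrow> word \<Rightarrow> word" where
  "word_mult xs ys = foldr red_cons xs ys"

definition free_group :: "nat \<Rightarrow> word monoid" where
  "free_group r = \<lparr>carrier = {w. reduced r w}, monoid.mult = word_mult, monoid.one = []\<rparr>"

definition gen_a :: letter where "gen_a = (0, True)"
definition gen_b :: letter where "gen_b = (1, True)"

section \<open>The Gromov boundary Y: infinite reduced words\<close>

definition boundary :: "nat \<Rightarrow> iword set" where
  "boundary r = {y. (\<forall>n. valid_letter r (y n)) \<and> (\<forall>n. y (Suc n) \<noteq> letter_inv (y n))}"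

(* cylinder (= Gromov boundary) topology *)
definition boundary_top :: "nat \<Rightarrow> iword topology" where
  "boundary_top r = subtopology (product_topology (\<lambda>_. discrete_topology (UNIV :: letter set)) UNIV)
                                (boundary r)"

definition red_cons_inf :: "letter \<Rightarrow> iword \<Rightarrow> iword" where
  "red_cons_inf x y = (if y 0 = letter_inv x then (\<lambda>n. y (Suc n))
                       else (\<lambda>n. case n of 0 \<Rightarrow> x | Suc m \<Rightarrow> y m))"

definition bd_act :: "word \<Rightarrow> iword \<Rightarrow> iword" where
  "bd_act g y = foldr red_cons_inf g y"

definition concat_inf :: "word \<Rightarrow> iword \<Rightarrow> iword" where
  "concat_inf s y = (\<lambda>n. if n < length s then s ! n else y (n - length s))"

definition Vset :: "nat \<Rightarrow> word \<Rightarrow> iword set" where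
  "Vset r s = {y \<in> boundary r. \<exists>y'\<in>boundary r. y = concat_inf s y' \<and> y' 0 \<noteq> letter_inv (last s)}"

definition a_infty :: iword where "a_infty = (\<lambda>_. gen_a)"

definition u_word :: "nat \<Rightarrow> nat \<Rightarrow> word" where
  "u_word r n = (let G = free_group r in
     [gen_a] [^]\<^bsub>G\<^esub> n \<otimes>\<^bsub>G\<^esub> [gen_b] \<otimes>\<^bsub>G\<^esub> inv\<^bsub>G\<^esub> ([gen_a] [^]\<^bsub>G\<^esub> n)
       \<otimes>\<^bsub>G\<^esub> inv\<^bsub>G\<^esub> [gen_b])"

section \<open>The profinite completion Z = lim Gamma/Gamma_n (n >= 1)\<close>

(* Gamma_n for n >= 1; level 0 is padded with the whole group (Gamma/Gamma = trivial) *)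
definition level :: "nat \<Rightarrow> (nat \<Rightarrow> word set) \<Rightarrow> nat \<Rightarrow> word set" where
  "level r \<Gamma> n = (if n = 0 then carrier (free_group r) else \<Gamma> n)"

definition Zspace :: "nat \<Rightarrow> (nat \<Rightarrow> word set) \<Rightarrow> (nat \<Rightarrow> word set) set" where
  "Zspace r \<Gamma> = {z. \<forall>n. z n \<in> rcosets\<^bsub>free_group r\<^esub> (level r \<Gamma> n) \<and> z (Suc n) \<subseteq> z n}"

definition Ztop :: "nat \<Rightarrow> (nat \<Rightarrow> word set) \<Rightarrow> (nat \<Rightarrow> word set) topology" where
  "Ztop r \<Gamma> = subtopology
     (product_topology (\<lambda>n. discrete_topology (rcosets\<^bsub>free_group r\<^esub> (level r \<Gamma> n))) UNIV)
     (Zspace r \<Gamma>)"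

definition Z_act :: "nat \<Rightarrow> word \<Rightarrow> (nat \<Rightarrow> word set) \<Rightarrow> (nat \<Rightarrow> word set)" where
  "Z_act r g z = (\<lambda>n. g <#\<^bsub>free_group r\<^esub> z n)"

definition Z_unit :: "nat \<Rightarrow> (nat \<Rightarrow> word set) \<Rightarrow> (nat \<Rightarrow> word set)" where
  "Z_unit r \<Gamma> = level r \<Gamma>"

definition Cset :: "nat \<Rightarrow> (nat \<Rightarrow> word set) \<Rightarrow> (nat \<Rightarrow> word) \<Rightarrow> nat \<Rightarrow> (nat \<Rightarrow> word set) set" where
  "Cset r \<Gamma> \<gamma> n = {z \<in> Zspace r \<Gamma>. z n = \<gamma> n <#\<^bsub>free_group r\<^esub> \<Gamma> n}"

section \<open>X = Y x Z and the function f\<close>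

type_synonym xpt = "iword \<times> (nat \<Rightarrow> word set)"

definition Xtop :: "nat \<Rightarrow> (nat \<Rightarrow> word set) \<Rightarrow> xpt topology" where
  "Xtop r \<Gamma> = prod_topology (boundary_top r) (Ztop r \<Gamma>)"

definition X_act :: "nat \<Rightarrow> word \<Rightarrow> xpt \<Rightarrow> xpt" where
  "X_act r g x = (bd_act g (fst x), Z_act r g (snd x))"

definition x0 :: "nat \<Rightarrow> (nat \<Rightarrow> word set) \<Rightarrow> xpt" where
  "x0 r \<Gamma> = (a_infty, Z_unit r \<Gamma>)"

definition Xplus :: "nat \<Rightarrow> (nat \<Rightarrow> word set) \<Rightarrow> (nat \<Rightarrow> word) \<Rightarrow> xpt set" where
  "Xplus r \<Gamma> \<gamma> = (\<Union>n\<in>{2..}. Vset r (u_word r n) \<times> Cset r \<Gamma> \<gamma> n)"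

definition Xminus :: "nat \<Rightarrow> (nat \<Rightarrow> word set) \<Rightarrow> (nat \<Rightarrow> word) \<Rightarrow> xpt set" where
  "Xminus r \<Gamma> \<gamma> = topspace (Xtop r \<Gamma>) - (Xplus r \<Gamma> \<gamma> \<union> {x0 r \<Gamma>})"

(* f = 1 on X_+, -1 on X_-; the value at the excluded point x0 is irrelevant *)
definition fX :: "nat \<Rightarrow> (nat \<Rightarrow> word set) \<Rightarrow> (nat \<Rightarrow> word) \<Rightarrow> xpt \<Rightarrow> real" where
  "fX r \<Gamma> \<gamma> x = (if x \<in> Xplus r \<Gamma> \<gamma> then 1 else if x \<in> Xminus r \<Gamma> \<gamma> then -1 else 0)"

definition x0_orbit :: "nat \<Rightarrow> (nat \<Rightarrow> word set) \<Rightarrow> xpt set" where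
  "x0_orbit r \<Gamma> = (\<lambda>g. X_act r g (x0 r \<Gamma>)) ` carrier (free_group r)"

definition is_action :: "nat \<Rightarrow> 'p topology \<Rightarrow> (word \<Rightarrow> 'p \<Rightarrow> 'p) \<Rightarrow> bool" where
  "is_action r T \<phi> \<longleftrightarrow>
     (\<forall>g\<in>carrier (free_group r). continuous_map T T (\<phi> g)) \<and>
     (\<forall>p\<in>topspace T. \<phi> \<one>\<^bsub>free_group r\<^esub> p = p) \<and>
     (\<forall>g\<in>carrier (free_group r). \<forall>h\<in>carrier (free_group r). \<forall>p\<in>topspace T.
        \<phi> (g \<otimes>\<^bsub>free_group r\<^esub> h) p = \<phi> g (\<phi> h p))"

definition minimal_action :: "nat \<Rightarrow> 'p topology \<Rightarrow> (word \<Rightarrow> 'p \<Rightarrow> 'p) \<Rightarrow> bool" where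
  "minimal_action r T \<phi> \<longleftrightarrow>
     (\<forall>C. closedin T C \<and> C \<noteq> {} \<and> (\<forall>g\<in>carrier (free_group r). \<phi> g ` C \<subseteq> C)
          \<longrightarrow> C = topspace T)"

definition mcmahon_ext :: "nat \<Rightarrow> (nat \<Rightarrow> word set) \<Rightarrow> (nat \<Rightarrow> word)
    \<Rightarrow> 'p topology \<Rightarrow> (word \<Rightarrow> 'p \<Rightarrow> 'p) \<Rightarrow> ('p \<Rightarrow> xpt) \<Rightarrow> bool" where
  "mcmahon_ext r \<Gamma> \<gamma> T \<phi> \<pi> \<longleftrightarrow>
     compact_space T \<and> metrizable_space T \<and>
     is_action r T \<phi> \<and> minimal_action r T \<phi> \<and>
     continuous_map T (Xtop r \<Gamma>) \<pi> \<and> \<pi> ` topspace T = topspace (Xtop r \<Gamma>) \<and>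
     (\<forall>g\<in>carrier (free_group r). \<forall>p\<in>topspace T. \<pi> (\<phi> g p) = X_act r g (\<pi> p)) \<and>
     (\<forall>x\<in>topspace (Xtop r \<Gamma>).
        card {p \<in> topspace T. \<pi> p = x} = (if x \<in> x0_orbit r \<Gamma> then 2 else 1)) \<and>
     (\<exists>F. continuous_map T euclideanreal F \<and>
          (\<forall>p\<in>topspace T. \<pi> p \<noteq> x0 r \<Gamma> \<longrightarrow> F p = fX r \<Gamma> \<gamma> (\<pi> p)))"

end

theory Submission imports Defs begin

fun nc :: "word \<Rightarrow> bool" where
  "nc (x # y # w) = (y \<noteq> letter_inv x \<and> nc (y # w))"
| "nc _ = True"

lemma nc_iff: "nc w \<longleftrightarrow> (\<forall>i. Suc i < length w \<longrightarrow> w ! Suc i \<noteq> letter_inv (w ! i))"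
proof (induction w rule: nc.induct)
  case (1 x y w)
  show ?case
  proof
    assume h: "nc (x # y # w)"
    show "\<forall>i. Suc i < length (x # y # w) \<longrightarrow> (x # y # w) ! Suc i \<noteq> letter_inv ((x # y # w) ! i)"
    proof (intro allI impI)
      fix i assume "Suc i < length (x # y # w)"
      then show "(x # y # w) ! Suc i \<noteq> letter_inv ((x # y # w) ! i)"
        using h 1 by (cases i) auto
    qed
  next
    assume h: "\<forall>i. Suc i < length (x # y # w) \<longrightarrow> (x # y # w) ! Suc i \<noteq> letter_inv ((x # y # w) ! i)"
    have "y \<noteq> letter_inv x" using h[rule_format, of 0] by simp
    moreover have "nc (y # w)" unfolding 1
    proof (intro allI impI)
      fix i assume "Suc i < length (y # w)"
      then show "(y # w) ! Suc i \<noteq> letter_inv ((y # w) ! i)" using h[rule_format, of "Suc i"] by simp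
    qed
    ultimately show "nc (x # y # w)" by simp
  qed
qed auto

lemma reduced_nc: "reduced r w \<longleftrightarrow> (\<forall>l\<in>set w. fst l < r) \<and> nc w"
  unfolding reduced_def valid_letter_def nc_iff by simp

lemma nc_Cons: "nc (x # w) \<longleftrightarrow> nc w \<and> (w \<noteq> [] \<longrightarrow> hd w \<noteq> letter_inv x)"
  by (cases w) auto

lemma nc_append: "nc (xs @ ys) \<longleftrightarrow> nc xs \<and> nc ys \<and> (xs \<noteq> [] \<and> ys \<noteq> [] \<longrightarrow> hd ys \<noteq> letter_inv (last xs))"
  by (induction xs rule: nc.induct) (auto simp: nc_Cons)

lemma nc_replicate: "x \<noteq> letter_inv x \<Longrightarrow> nc (replicate n x)"
  by (induction n) (auto simp: nc_Cons)

lemma word_mult_app: "nc (w @ ys) \<Longrightarrow> word_mult w ys = w @ ys"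
proof (induction w)
  case Nil then show ?case by (simp add: word_mult_def)
next
  case (Cons l w)
  have "nc (w @ ys)" using Cons.prems by (simp add: nc_Cons)
  then have "word_mult w ys = w @ ys" by (rule Cons.IH)
  then show ?case using Cons.prems
    by (cases "w @ ys") (auto simp: word_mult_def red_cons_def nc_Cons)
qed

lemma li_simps [simp]: "letter_inv (a, b) = (a, \<not> b)"
  by (simp add: letter_inv_def)

lemma cancel_rep: "word_mult (replicate k (0,False)) (replicate (k + m) (0,True)) = replicate m (0,True)"
proof (induction k arbitrary: m)
  case 0 then show ?case by (simp add: word_mult_def)
next
  case (Suc k)
  have "word_mult (replicate (Suc k) (0,False)) (replicate (Suc k + m) (0,True))
     = red_cons (0,False) (word_mult (replicate k (0,False)) (replicate (k + Suc m) (0,True)))"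
    by (simp add: word_mult_def)
  also have "\<dots> = replicate m (0,True)" using Suc.IH[of "Suc m"] by (simp add: red_cons_def)
  finally show ?case .
qed

lemma carrier_fg: "w \<in> carrier (free_group r) \<longleftrightarrow> reduced r w"
  by (simp add: free_group_def)

lemma mult_fg: "x \<otimes>\<^bsub>free_group r\<^esub> y = word_mult x y"
  by (simp add: free_group_def)

lemma one_fg: "\<one>\<^bsub>free_group r\<^esub> = []"
  by (simp add: free_group_def)

lemma pow_a: "[gen_a] [^]\<^bsub>free_group r\<^esub> n = replicate n gen_a"
proof (induction n)
  case 0 then show ?case by (simp add: one_fg)
next
  case (Suc n)
  have "nc (replicate n gen_a @ [gen_a])"
    by (simp add: nc_append nc_replicate gen_a_def)
  then show ?case using Suc by (simp add: mult_fg word_mult_app replicate_append_same)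
qed

lemma u_word_eq:
  assumes G: "group (free_group r)" and r: "r \<ge> 2" and n: "n \<ge> 1"
  shows "u_word r n = replicate n gen_a @ gen_b # replicate n (0,False) @ [(1,False)]"
proof -
  interpret G: group "free_group r" by (rule G)
  have ca: "replicate n gen_a \<in> carrier (free_group r)"
    using r by (simp add: carrier_fg reduced_nc nc_replicate gen_a_def)
  have ca': "replicate n (0,False) \<in> carrier (free_group r)"
    using r by (simp add: carrier_fg reduced_nc nc_replicate)
  have ia: "inv\<^bsub>free_group r\<^esub> (replicate n gen_a) = replicate n (0,False)"
    apply (rule G.inv_equality[OF _ ca ca'])
    using cancel_rep[of n 0] by (simp add: mult_fg one_fg gen_a_def)
  have cb: "[gen_b] \<in> carrier (free_group r)" "[(1,False)] \<in> carrier (free_group r)"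
    using r by (auto simp: carrier_fg reduced_nc gen_b_def)
  have ib: "inv\<^bsub>free_group r\<^esub> [gen_b] = [(1,False)]"
    apply (rule G.inv_equality[OF _ cb])
    by (simp add: mult_fg one_fg gen_b_def word_mult_def red_cons_def)
  have e1: "word_mult (replicate n gen_a) [gen_b] = replicate n gen_a @ [gen_b]"
    by (rule word_mult_app) (simp add: nc_append nc_replicate gen_a_def gen_b_def)
  have n2: "nc ((replicate n gen_a @ [gen_b]) @ replicate n (0,False))"
    using n by (simp add: nc_append nc_replicate gen_a_def gen_b_def nc_Cons)
  have e2: "word_mult (replicate n gen_a @ [gen_b]) (replicate n (0,False)) = replicate n gen_a @ gen_b # replicate n (0,False)"
    using word_mult_app[OF n2] by simp
  have n3: "nc ((replicate n gen_a @ gen_b # replicate n (0,False)) @ [(1,False)])"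
    using n by (simp add: nc_append nc_replicate gen_a_def gen_b_def nc_Cons)
  have e3: "word_mult (replicate n gen_a @ gen_b # replicate n (0,False)) [(1,False)] = replicate n gen_a @ gen_b # replicate n (0,False) @ [(1,False)]"
    using word_mult_app[OF n3] by simp
  show ?thesis
    unfolding u_word_def Let_def pow_a ia ib mult_fg e1 e2 e3 by simp
qed

lemma a_infty_bd: "r \<ge> 1 \<Longrightarrow> a_infty \<in> boundary r"
  by (simp add: boundary_def a_infty_def valid_letter_def gen_a_def)

lemma yN_bd: "r \<ge> 2 \<Longrightarrow> (\<lambda>i. if i < N then gen_a else gen_b) \<in> boundary r"
  by (auto simp add: boundary_def valid_letter_def gen_a_def gen_b_def)

lemma concat_bd:
  assumes "reduced r s" "s \<noteq> []" "y \<in> boundary r" "y 0 \<noteq> letter_inv (last s)"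
  shows "concat_inf s y \<in> boundary r"
proof -
  have v: "\<forall>l\<in>set s. fst l < r" and c: "\<forall>i. Suc i < length s \<longrightarrow> s ! Suc i \<noteq> letter_inv (s ! i)"
    using assms(1) unfolding reduced_nc nc_iff by auto
  have vy: "\<forall>n. fst (y n) < r" "\<forall>n. y (Suc n) \<noteq> letter_inv (y n)"
    using assms(3) by (auto simp: boundary_def valid_letter_def)
  have "valid_letter r (concat_inf s y n)" for n
    using v vy by (auto simp: concat_inf_def valid_letter_def)
  moreover have "concat_inf s y (Suc n) \<noteq> letter_inv (concat_inf s y n)" for n
  proof (cases "Suc n < length s")
    case True then show ?thesis using c by (simp add: concat_inf_def)
  next
    case False
    show ?thesis
    proof (cases "Suc n = length s")
      case True
      then have "s ! n = last s" using assms(2) by (simp add: last_conv_nth True[symmetric])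
      then show ?thesis using True assms(4) by (simp add: concat_inf_def)
    next
      case False
      with \<open>\<not> Suc n < length s\<close> have "Suc n - length s = Suc (n - length s)" "\<not> n < length s" by auto
      then show ?thesis using vy \<open>\<not> Suc n < length s\<close> by (simp add: concat_inf_def)
    qed
  qed
  ultimately show ?thesis by (simp add: boundary_def)
qed

lemma Vset_prefix: "y \<in> Vset r s \<Longrightarrow> i < length s \<Longrightarrow> y i = s ! i"
  by (auto simp: Vset_def concat_inf_def)

lemma yN_notV:
  assumes G: "group (free_group r)" and r: "r \<ge> 2" and n: "n \<ge> 2"
  shows "(\<lambda>i. if i < N then gen_a else gen_b) \<notin> Vset r (u_word r n)"
proof
  assume h: "(\<lambda>i. if i < N then gen_a else gen_b) \<in> Vset r (u_word r n)"
  have u: "u_word r n = replicate n gen_a @ gen_b # replicate n (0,False) @ [(1,False)]"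
    using u_word_eq[OF G r] n by simp
  note P = Vset_prefix[OF h, unfolded u]
  consider "N < n" | "N > n" | "N = n" by linarith
  then show False
  proof cases
    case 1 then show False using P[of N] by (simp add: nth_append gen_a_def gen_b_def)
  next
    case 2 then show False using P[of n] by (simp add: nth_append gen_a_def gen_b_def)
  next
    case 3 then show False using P[of "Suc n"] n by (simp add: nth_append gen_a_def gen_b_def)
  qed
qed

lemma wn_facts:
  assumes G: "group (free_group r)" and r: "r \<ge> 2" and n: "n \<ge> 2"
  shows "concat_inf (u_word r n) a_infty \<in> Vset r (u_word r n)"
    and "\<forall>i<n. concat_inf (u_word r n) a_infty i = gen_a"
    and "concat_inf (u_word r n) a_infty n = gen_b"
proof -
  interpret G: group "free_group r" by (rule G)
  have u: "u_word r n = replicate n gen_a @ gen_b # replicate n (0,False) @ [(1,False)]"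
    using u_word_eq[OF G r] n by simp
  have red: "reduced r (u_word r n)"
    unfolding u using r n by (simp add: reduced_nc nc_append nc_replicate gen_a_def gen_b_def nc_Cons)
  have lst: "last (u_word r n) = (1,False)" unfolding u by simp
  have ab: "a_infty \<in> boundary r" using r a_infty_bd by simp
  have a0: "a_infty 0 \<noteq> letter_inv (last (u_word r n))" unfolding lst by (simp add: a_infty_def gen_a_def)
  have "concat_inf (u_word r n) a_infty \<in> boundary r"
    by (rule concat_bd[OF red _ ab a0]) (simp add: u)
  then show "concat_inf (u_word r n) a_infty \<in> Vset r (u_word r n)"
    unfolding Vset_def using ab a0 by blast
  show "\<forall>i<n. concat_inf (u_word r n) a_infty i = gen_a"
    unfolding u by (simp add: concat_inf_def nth_append)
  show "concat_inf (u_word r n) a_infty n = gen_b"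
    unfolding u by (simp add: concat_inf_def nth_append)
qed

lemma prod_disc_nbhd:
  assumes "openin (product_topology (\<lambda>i::nat. discrete_topology (D i)) UNIV) S" "x \<in> S"
  shows "\<exists>N. \<forall>y\<in>Pi\<^sub>E UNIV D. (\<forall>i<N. y i = x i) \<longrightarrow> y \<in> S"
proof -
  obtain U where U: "finite {i. U i \<noteq> D i}" "x \<in> Pi\<^sub>E UNIV U" "Pi\<^sub>E UNIV U \<subseteq> S"
    using assms unfolding openin_product_topology_alt by force
  obtain N where N: "{i. U i \<noteq> D i} \<subseteq> {..<N}" using finite_nat_bounded[OF U(1)] by blast
  have "y \<in> S" if "y \<in> Pi\<^sub>E UNIV D" "\<forall>i<N. y i = x i" for y
  proof -
    have "y \<in> Pi\<^sub>E UNIV U"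
    proof
      fix i :: nat
      show "y i \<in> U i"
      proof (cases "i < N")
        case True then show ?thesis using that U(2) by auto
      next
        case False then have "U i = D i" using N by auto
        then show ?thesis using that by auto
      qed
    qed auto
    then show ?thesis using U(3) by blast
  qed
  then show ?thesis by blast
qed

lemma sub_disc_nbhd:
  assumes "openin (subtopology (product_topology (\<lambda>i::nat. discrete_topology (D i)) UNIV) A) S" "x \<in> S"
  shows "\<exists>N. \<forall>y\<in>Pi\<^sub>E UNIV D \<inter> A. (\<forall>i<N. y i = x i) \<longrightarrow> y \<in> S"
proof -
  obtain T where T: "openin (product_topology (\<lambda>i::nat. discrete_topology (D i)) UNIV) T" "S = T \<inter> A"
    using assms(1) unfolding openin_subtopology by blast
  obtain N where "\<forall>y\<in>Pi\<^sub>E UNIV D. (\<forall>i<N. y i = x i) \<longrightarrow> y \<in> T"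
    using prod_disc_nbhd[OF T(1)] assms(2) T(2) by blast
  then show ?thesis using T(2) by blast
qed

lemma topspace_bd: "topspace (boundary_top r) = boundary r"
  by (simp add: boundary_top_def)

lemma topspace_Z: "topspace (Ztop r \<Gamma>) = Zspace r \<Gamma>"
proof -
  have "Zspace r \<Gamma> \<subseteq> (\<Pi>\<^sub>E n\<in>UNIV. rcosets\<^bsub>free_group r\<^esub> (level r \<Gamma> n))"
    unfolding Zspace_def by (auto simp: PiE_def Pi_def)
  then show ?thesis unfolding Ztop_def by (simp add: topspace_subtopology Int_absorb1)
qed

lemma lcos_self:
  fixes G (structure)
  assumes "group G" "subgroup H G" "h \<in> H"
  shows "h <#\<^bsub>G\<^esub> H = H"
proof -
  interpret group G by fact
  have hc: "h \<in> carrier G" using assms(2,3) by (rule subgroup.mem_carrier)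
  show ?thesis
  proof
    show "h <# H \<subseteq> H" using assms(2,3) by (auto simp: l_coset_def subgroup.m_closed)
    show "H \<subseteq> h <# H"
    proof
      fix x assume x: "x \<in> H"
      have xc: "x \<in> carrier G" using subgroup.mem_carrier[OF assms(2) x] .
      have "inv h \<otimes> x \<in> H" using assms(2,3) x by (simp add: subgroup.m_closed subgroup.m_inv_closed)
      moreover have "x = h \<otimes> (inv h \<otimes> x)" using hc xc by (simp add: m_assoc[symmetric])
      ultimately show "x \<in> h <# H" unfolding l_coset_def by blast
    qed
  qed
qed

lemma antitone_Gamma:
  assumes "\<forall>n\<ge>1. \<Gamma> (Suc n) \<subset> \<Gamma> n" "1 \<le> m" "m \<le> k"
  shows "\<Gamma> k \<subseteq> \<Gamma> m"
  using assms(3)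
proof (induction k rule: dec_induct)
  case base then show ?case by simp
next
  case (step j)
  have "j \<ge> 1" using step(1) assms(2) by linarith
  then have "\<Gamma> (Suc j) \<subset> \<Gamma> j" using assms(1) by blast
  then have "\<Gamma> (Suc j) \<subseteq> \<Gamma> j" by blast
  then show ?case using step.IH by blast
qed

lemma level_sub:
  assumes G: "group (free_group r)" and N: "\<forall>n\<ge>1. normal (\<Gamma> n) (free_group r)"
  shows "subgroup (level r \<Gamma> m) (free_group r)"
proof (cases "m = 0")
  case True then show ?thesis using group.subgroup_self[OF G] by (simp add: level_def)
next
  case False
  then have "normal (\<Gamma> m) (free_group r)" using N by simp
  then show ?thesis using False normal_imp_subgroup by (simp add: level_def)
qed

lemma level_mono:
  assumes G: "group (free_group r)" and N: "\<forall>n\<ge>1. normal (\<Gamma> n) (free_group r)"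
    and D: "\<forall>n\<ge>1. \<Gamma> (Suc n) \<subset> \<Gamma> n"
  shows "level r \<Gamma> (Suc m) \<subseteq> level r \<Gamma> m"
proof (cases "m = 0")
  case True then show ?thesis using level_sub[OF G N, of 1] subgroup.subset by (simp add: level_def)
next
  case False
  then have "\<Gamma> (Suc m) \<subset> \<Gamma> m" using D by simp
  then show ?thesis using False by (auto simp add: level_def)
qed

lemma Zunit_in:
  assumes G: "group (free_group r)" and N: "\<forall>n\<ge>1. normal (\<Gamma> n) (free_group r)"
    and D: "\<forall>n\<ge>1. \<Gamma> (Suc n) \<subset> \<Gamma> n"
  shows "Z_unit r \<Gamma> \<in> Zspace r \<Gamma>"
proof -
  interpret G: group "free_group r" by (rule G)
  have "level r \<Gamma> m \<in> rcosets\<^bsub>free_group r\<^esub> (level r \<Gamma> m)" for m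
  proof -
    have s: "level r \<Gamma> m \<subseteq> carrier (free_group r)" using level_sub[OF G N] subgroup.subset by blast
    have "level r \<Gamma> m #>\<^bsub>free_group r\<^esub> \<one>\<^bsub>free_group r\<^esub> \<in> rcosets\<^bsub>free_group r\<^esub> (level r \<Gamma> m)"
      by (rule G.rcosetsI[OF s G.one_closed])
    then show ?thesis using G.coset_mult_one[OF s] by simp
  qed
  then show ?thesis using level_mono[OF G N D] by (simp add: Zspace_def Z_unit_def)
qed

lemma zn_facts:
  assumes G: "group (free_group r)" and N: "\<forall>n\<ge>1. normal (\<Gamma> n) (free_group r)"
    and D: "\<forall>n\<ge>1. \<Gamma> (Suc n) \<subset> \<Gamma> n"
    and g: "\<forall>n\<ge>2. \<gamma> n \<in> \<Gamma> (n - 1) - \<Gamma> n" and n: "n \<ge> 2"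
  shows "(\<lambda>m. \<gamma> n <#\<^bsub>free_group r\<^esub> level r \<Gamma> m) \<in> Cset r \<Gamma> \<gamma> n"
    and "\<forall>m<n. \<gamma> n <#\<^bsub>free_group r\<^esub> level r \<Gamma> m = level r \<Gamma> m"
proof -
  interpret G: group "free_group r" by (rule G)
  have gn: "\<gamma> n \<in> \<Gamma> (n - 1)" using g n by auto
  have gc: "\<gamma> n \<in> carrier (free_group r)"
    using gn level_sub[OF G N, of "n - 1"] n subgroup.mem_carrier by (fastforce simp: level_def)
  have inl: "\<gamma> n \<in> level r \<Gamma> m" if "m < n" for m
  proof (cases "m = 0")
    case True then show ?thesis using gc by (simp add: level_def)
  next
    case False
    then have "\<Gamma> (n - 1) \<subseteq> \<Gamma> m" using antitone_Gamma[OF D, of m "n - 1"] that by auto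
    then show ?thesis using gn False by (auto simp: level_def)
  qed
  show eq: "\<forall>m<n. \<gamma> n <#\<^bsub>free_group r\<^esub> level r \<Gamma> m = level r \<Gamma> m"
    using lcos_self[OF G level_sub[OF G N] inl] by blast
  have rc: "\<gamma> n <#\<^bsub>free_group r\<^esub> level r \<Gamma> m \<in> rcosets\<^bsub>free_group r\<^esub> (level r \<Gamma> m)" for m
  proof (cases "m < n")
    case True
    then show ?thesis using Zunit_in[OF G N D] eq by (simp add: Zspace_def Z_unit_def)
  next
    case False
    then have m1: "m \<ge> 1" "level r \<Gamma> m = \<Gamma> m" using n by (auto simp: level_def)
    have nm: "normal (\<Gamma> m) (free_group r)" using N m1 by blast
    have "\<Gamma> m #>\<^bsub>free_group r\<^esub> \<gamma> n = \<gamma> n <#\<^bsub>free_group r\<^esub> \<Gamma> m"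
      using normal.coset_eq[OF nm] gc by blast
    moreover have "\<Gamma> m #>\<^bsub>free_group r\<^esub> \<gamma> n \<in> rcosets\<^bsub>free_group r\<^esub> (\<Gamma> m)"
      using G.rcosetsI[OF _ gc] normal_imp_subgroup[OF nm] subgroup.subset by blast
    ultimately show ?thesis using m1 by simp
  qed
  have mo: "\<gamma> n <#\<^bsub>free_group r\<^esub> level r \<Gamma> (Suc m) \<subseteq> \<gamma> n <#\<^bsub>free_group r\<^esub> level r \<Gamma> m" for m
    using level_mono[OF G N D, of m] unfolding l_coset_def by blast
  have "level r \<Gamma> n = \<Gamma> n" using n by (simp add: level_def)
  then show "(\<lambda>m. \<gamma> n <#\<^bsub>free_group r\<^esub> level r \<Gamma> m) \<in> Cset r \<Gamma> \<gamma> n"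
    using rc mo by (simp add: Cset_def Zspace_def)
qed

theorem lemma5p4:
  fixes r :: nat and \<Gamma> :: "nat \<Rightarrow> word set" and \<gamma> :: "nat \<Rightarrow> word"
    and T :: "'p topology" and \<phi> :: "word \<Rightarrow> 'p \<Rightarrow> 'p" and \<pi>f :: "'p \<Rightarrow> xpt"
  assumes "r \<ge> 2"
    and "\<forall>n\<ge>1. normal (\<Gamma> n) (free_group r)"
    and "\<forall>n\<ge>1. finite (rcosets\<^bsub>free_group r\<^esub> (\<Gamma> n))"
    and "\<forall>n\<ge>1. \<Gamma> (Suc n) \<subset> \<Gamma> n"
    and "(\<Inter>n\<in>{1..}. \<Gamma> n) = {\<one>\<^bsub>free_group r\<^esub>}"
    and "\<forall>n\<ge>2. \<gamma> n \<in> \<Gamma> (n - 1) - \<Gamma> n"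
    and "mcmahon_ext r \<Gamma> \<gamma> T \<phi> \<pi>f"
  shows "\<not> open_map T (boundary_top r) (fst \<circ> \<pi>f)"
proof
  assume om: "open_map T (boundary_top r) (fst \<circ> \<pi>f)"
  note r = assms(1) and N = assms(2) and D = assms(4) and g = assms(6)
  have G: "group (free_group r)" using N[rule_format, of 1] by (simp add: normal_def)
  have cT: "compact_space T" and cont: "continuous_map T (Xtop r \<Gamma>) \<pi>f"
    and surj: "\<pi>f ` topspace T = topspace (Xtop r \<Gamma>)"
    using assms(7) unfolding mcmahon_ext_def by auto
  obtain F where contF: "continuous_map T euclideanreal F"
    and Feq: "\<forall>p\<in>topspace T. \<pi>f p \<noteq> x0 r \<Gamma> \<longrightarrow> F p = fX r \<Gamma> \<gamma> (\<pi>f p)"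
    using assms(7) unfolding mcmahon_ext_def by blast
  have topX: "topspace (Xtop r \<Gamma>) = boundary r \<times> Zspace r \<Gamma>"
    by (simp add: Xtop_def topspace_bd topspace_Z)
  have HX: "Hausdorff_space (Xtop r \<Gamma>)"
    unfolding Xtop_def boundary_top_def Ztop_def
    by (intro Hausdorff_space_prod_topology[THEN iffD2] disjI2 conjI Hausdorff_space_subtopology
        Hausdorff_space_product_topology[THEN iffD2] disjI2 ballI Hausdorff_space_discrete_topology)
  have ab: "a_infty \<in> boundary r" using r a_infty_bd by simp
  have zu: "Z_unit r \<Gamma> \<in> Zspace r \<Gamma>" by (rule Zunit_in[OF G N D])
  define B where "B = {p \<in> topspace T. F p \<in> {1/2..}}"
  have "closedin T B" unfolding B_def
    by (rule closedin_continuous_map_preimage[OF contF]) simp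
  then have "compactin T B" by (rule closedin_compact_space[OF cT])
  then have "compactin (Xtop r \<Gamma>) (\<pi>f ` B)" by (rule image_compactin[OF _ cont])
  then have cB: "closedin (Xtop r \<Gamma>) (\<pi>f ` B)" by (rule compactin_imp_closedin[OF HX])
  have "x0 r \<Gamma> \<in> \<pi>f ` B"
  proof (rule ccontr)
    assume nx: "x0 r \<Gamma> \<notin> \<pi>f ` B"
    define Op where "Op = topspace (Xtop r \<Gamma>) - \<pi>f ` B"
    have oO: "openin (Xtop r \<Gamma>) Op" using cB unfolding Op_def closedin_def by blast
    have "(a_infty, Z_unit r \<Gamma>) \<in> Op" using nx ab zu topX unfolding Op_def x0_def by auto
    then obtain U V where UV: "openin (boundary_top r) U" "openin (Ztop r \<Gamma>) V"
      "a_infty \<in> U" "Z_unit r \<Gamma> \<in> V" "U \<times> V \<subseteq> Op"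
      using openin_prod_topology_alt[THEN iffD1, rule_format, OF oO[unfolded Xtop_def] \<open>(a_infty, Z_unit r \<Gamma>) \<in> Op\<close>]
      by blast
    obtain N1 where N1: "\<forall>y\<in>Pi\<^sub>E UNIV (\<lambda>_. UNIV) \<inter> boundary r. (\<forall>i<N1. y i = a_infty i) \<longrightarrow> y \<in> U"
      using sub_disc_nbhd[OF UV(1)[unfolded boundary_top_def] UV(3)] by blast
    obtain N2 where N2: "\<forall>z\<in>Pi\<^sub>E UNIV (\<lambda>n. rcosets\<^bsub>free_group r\<^esub> (level r \<Gamma> n)) \<inter> Zspace r \<Gamma>.
        (\<forall>i<N2. z i = Z_unit r \<Gamma> i) \<longrightarrow> z \<in> V"
      using sub_disc_nbhd[OF UV(2)[unfolded Ztop_def] UV(4)] by blast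
    define n where "n = max (max N1 N2) 2"
    have n2: "n \<ge> 2" unfolding n_def by simp
    define w where "w = concat_inf (u_word r n) a_infty"
    define z where "z = (\<lambda>m. \<gamma> n <#\<^bsub>free_group r\<^esub> level r \<Gamma> m)"
    note wf = wn_facts[OF G r n2, folded w_def]
    note zf = zn_facts[OF G N D g n2, folded z_def]
    have wb: "w \<in> boundary r" using wf(1) unfolding Vset_def by blast
    have "w \<in> U" using N1 wb wf(2) unfolding n_def a_infty_def by auto
    have zZ: "z \<in> Zspace r \<Gamma>" using zf(1) unfolding Cset_def by blast
    have "z \<in> Pi\<^sub>E UNIV (\<lambda>n. rcosets\<^bsub>free_group r\<^esub> (level r \<Gamma> n))"
      using zZ unfolding Zspace_def by auto
    then have "z \<in> V" using N2 zZ zf(2) unfolding n_def Z_unit_def z_def by auto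
    have wzO: "(w, z) \<in> Op" using \<open>w \<in> U\<close> \<open>z \<in> V\<close> UV(5) by blast
    then have "(w, z) \<in> topspace (Xtop r \<Gamma>)" unfolding Op_def by blast
    then obtain p where p: "p \<in> topspace T" "\<pi>f p = (w, z)" using surj by (metis imageE)
    have "w \<noteq> a_infty" using wf(3) by (auto simp: a_infty_def gen_a_def gen_b_def)
    then have "\<pi>f p \<noteq> x0 r \<Gamma>" using p by (simp add: x0_def)
    moreover have "(w, z) \<in> Xplus r \<Gamma> \<gamma>" unfolding Xplus_def using wf(1) zf(1) n2 by blast
    ultimately have "F p = 1" using Feq p by (simp add: fX_def)
    then have "p \<in> B" using p by (simp add: B_def)
    then have "(w, z) \<in> \<pi>f ` B" using p(2) by (metis image_eqI)
    then show False using wzO unfolding Op_def by blast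
  qed
  then obtain p0 where p0: "p0 \<in> B" "\<pi>f p0 = x0 r \<Gamma>" by (metis imageE)
  define A where "A = {p \<in> topspace T. F p \<in> {0<..}}"
  have "openin T A" unfolding A_def
    by (rule openin_continuous_map_preimage[OF contF]) simp
  then have oA: "openin (boundary_top r) ((fst \<circ> \<pi>f) ` A)" using om unfolding open_map_def by blast
  have "p0 \<in> A" using p0 by (auto simp: A_def B_def)
  then have "a_infty \<in> (fst \<circ> \<pi>f) ` A" using p0 by (force simp: x0_def)
  then obtain N0 where N0: "\<forall>y\<in>Pi\<^sub>E UNIV (\<lambda>_. UNIV) \<inter> boundary r. (\<forall>i<N0. y i = a_infty i) \<longrightarrow> y \<in> (fst \<circ> \<pi>f) ` A"
    using sub_disc_nbhd[OF oA[unfolded boundary_top_def]] by blast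
  define y where "y = (\<lambda>i. if i < N0 then gen_a else gen_b)"
  have "y \<in> boundary r" using yN_bd[OF r] unfolding y_def .
  then have "y \<in> (fst \<circ> \<pi>f) ` A" using N0 unfolding y_def a_infty_def by auto
  then obtain p where p: "p \<in> A" "fst (\<pi>f p) = y" by auto
  have pT: "p \<in> topspace T" using p A_def by blast
  have "y \<noteq> a_infty" unfolding y_def a_infty_def
    by (metis (mono_tags) less_irrefl gen_a_def gen_b_def prod.inject zero_neq_one)
  then have nx: "\<pi>f p \<noteq> x0 r \<Gamma>" using p by (auto simp: x0_def)
  have inX: "\<pi>f p \<in> topspace (Xtop r \<Gamma>)" using cont pT unfolding continuous_map_def by (metis funcset_mem)
  have "\<pi>f p \<notin> Xplus r \<Gamma> \<gamma>"
  proof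
    assume "\<pi>f p \<in> Xplus r \<Gamma> \<gamma>"
    then obtain n where n2: "n \<ge> 2" and inV: "fst (\<pi>f p) \<in> Vset r (u_word r n)" unfolding Xplus_def by auto
    have "y \<notin> Vset r (u_word r n)" using yN_notV[OF G r n2, of N0] unfolding y_def .
    then show False using inV p(2) by simp
  qed
  then have "\<pi>f p \<in> Xminus r \<Gamma> \<gamma>" using nx inX by (simp add: Xminus_def)
  then have "F p = -1" using Feq pT nx \<open>\<pi>f p \<notin> Xplus r \<Gamma> \<gamma>\<close> by (simp add: fX_def)
  then show False using p(1) by (simp add: A_def)
qed

end
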